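(* For all Hessenberg spaces $H$ and $H'$ of $n\times n$ matrices, $X_{H+H'}=X_H\cup X_{H'}$, where for a Hessenberg space $K$ we set $X_K=\{[g]\in GL_n(\mathbb{C})/B: g^{-1}E_{1n}g\in K\}$.
   Context: $B$ is the group of invertible upper-triangular $n\times n$ complex matrices; $[g]$ denotes the flag whose $k$-dimensional subspace is spanned by the first $k$ columns of $g$. $E_{kl}$ is the matrix unit with $1$ in entry $(k,l)$. A Hessenberg space is a subspace of the form $H_h=\operatorname{span}\{E_{kl}: k\le h(l)\}$ for a nondecreasing function $h:\{1,\dots,n\}\to\{0,1,\dots,n\}$; $H+H'$ is the subspace spanned by $H\cup H'$ (again a Hessenberg space, spanned by the matrix units lying in $H$ or $H'$). *)

theory Defs
  imports "Jordan_Normal_Form.Matrix"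
begin

text \<open>Indices are 0-based: rows/columns 0..n-1. A Hessenberg function is
  h : {0..n-1} -> {0..n} nondecreasing; entry (k,l) is allowed iff k < h l
  (this is the paper's k' <= h'(l') with k' = k+1, l' = l+1).\<close>

definition hessenberg_fun :: "nat \<Rightarrow> (nat \<Rightarrow> nat) \<Rightarrow> bool" where
  "hessenberg_fun n h \<longleftrightarrow> (\<forall>l<n. h l \<le> n) \<and> (\<forall>i j. i \<le> j \<and> j < n \<longrightarrow> h i \<le> h j)"

definition hess_space :: "nat \<Rightarrow> (nat \<Rightarrow> nat) \<Rightarrow> complex mat set" where
  "hess_space n h = {A \<in> carrier_mat n n. \<forall>k<n. \<forall>l<n. \<not> k < h l \<longrightarrow> A $$ (k,l) = 0}"

definition space_sum :: "complex mat set \<Rightarrow> complex mat set \<Rightarrow> complex mat set" where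
  "space_sum H H' = {A + B | A B. A \<in> H \<and> B \<in> H'}"

definition E1n :: "nat \<Rightarrow> complex mat" where
  "E1n n = mat n n (\<lambda>(i,j). if i = 0 \<and> j = n - 1 then 1 else 0)"

text \<open>The flag [g]: its k-th member is the span of the first k columns of g.\<close>
definition flag_of :: "nat \<Rightarrow> complex mat \<Rightarrow> nat \<Rightarrow> complex vec set" where
  "flag_of n g k = {g *\<^sub>v x | x. x \<in> carrier_vec n \<and> (\<forall>i. k \<le> i \<and> i < n \<longrightarrow> x $ i = 0)}"

definition X_space :: "nat \<Rightarrow> complex mat set \<Rightarrow> (nat \<Rightarrow> complex vec set) set" where
  "X_space n K = {flag_of n g | g. g \<in> carrier_mat n n \<and> invertible_mat g \<and>
     (\<exists>gi \<in> carrier_mat n n. gi * g = 1\<^sub>m n \<and> gi * E1n n * g \<in> K)}"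

end

theory Submission
  imports Defs
begin
lemma E1n_entry:
  assumes gi: "gi \<in> carrier_mat n n" and g: "g \<in> carrier_mat n n" and k: "k < n" and l: "l < n"
  shows "(gi * E1n n * g) $$ (k,l) = gi $$ (k,0) * g $$ (n-1,l)"
proof -
  have e: "E1n n \<in> carrier_mat n n" by (simp add: E1n_def)
  have 1: "(gi * E1n n) $$ (k,j) = (if j = n - 1 then gi $$ (k,0) else 0)" if "j < n" for j
    using gi e k that
    by (simp add: E1n_def scalar_prod_def if_distrib[of "\<lambda>x. _ * x"] sum.delta cong: if_cong)
  have ge: "gi * E1n n \<in> carrier_mat n n" using gi e by simp
  have "(gi * E1n n * g) $$ (k,l) = row (gi * E1n n) k \<bullet> col g l"
    using ge g k l by (subst index_mult_mat(1)) auto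
  also have "\<dots> = (\<Sum>j<n. (gi * E1n n) $$ (k,j) * g $$ (j,l))"
    unfolding scalar_prod_def using ge g k l carrier_matD[OF ge] carrier_matD[OF g]
    by (intro sum.cong) (auto simp: atLeast0LessThan)
  also have "\<dots> = (\<Sum>j<n. if j = n - 1 then gi $$ (k,0) * g $$ (j,l) else 0)"
    by (rule sum.cong) (auto simp: 1)
  also have "\<dots> = gi $$ (k,0) * g $$ (n-1,l)" using k by (simp add: sum.delta)
  finally show ?thesis .
qed

lemma rank1_sum:
  assumes h: "hessenberg_fun n h" and h': "hessenberg_fun n h'"
    and Mc: "M \<in> carrier_mat n n"
    and uv: "\<And>k l. k < n \<Longrightarrow> l < n \<Longrightarrow> M $$ (k,l) = u k * v l"
    and S: "M \<in> space_sum (hess_space n h) (hess_space n h')"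
  shows "M \<in> hess_space n h \<or> M \<in> hess_space n h'"
proof (rule ccontr)
  assume "\<not> ?thesis"
  then obtain k1 l1 k2 l2 where a: "k1 < n" "l1 < n" "\<not> k1 < h l1" "u k1 * v l1 \<noteq> 0"
    and b: "k2 < n" "l2 < n" "\<not> k2 < h' l2" "u k2 * v l2 \<noteq> 0"
    using Mc uv unfolding hess_space_def by auto
  obtain A B where AB: "M = A + B" "A \<in> hess_space n h" "B \<in> hess_space n h'"
    using S unfolding space_sum_def by auto
  define k where "k = max k1 k2"
  define l where "l = min l1 l2"
  have kn: "k < n" "l < n" using a b by (auto simp: k_def l_def)
  have "u k \<noteq> 0" "v l \<noteq> 0" using a b by (auto simp: k_def l_def max_def min_def)
  hence ne: "M $$ (k,l) \<noteq> 0" using uv kn by simp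
  have "h l \<le> h l1" using h a unfolding hessenberg_fun_def l_def by auto
  hence c1: "\<not> k < h l" using a by (auto simp: k_def)
  have "h' l \<le> h' l2" using h' b unfolding hessenberg_fun_def l_def by auto
  hence c2: "\<not> k < h' l" using b by (auto simp: k_def)
  have "A $$ (k,l) = 0" using AB(2) c1 kn unfolding hess_space_def by auto
  moreover have "B $$ (k,l) = 0" using AB(3) c2 kn unfolding hess_space_def by auto
  moreover have "M $$ (k,l) = A $$ (k,l) + B $$ (k,l)"
    using AB(1,3) kn unfolding hess_space_def by auto
  ultimately show False using ne by simp
qed

lemma hess_sub1: "H \<subseteq> space_sum (hess_space n h) (hess_space n h')" if "H = hess_space n h"
proof
  fix A assume "A \<in> H"
  moreover have "0\<^sub>m n n \<in> hess_space n h'" by (simp add: hess_space_def)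
  ultimately show "A \<in> space_sum (hess_space n h) (hess_space n h')"
    unfolding space_sum_def using that hess_space_def
    by (smt (verit, best) mem_Collect_eq right_add_zero_mat)
qed

lemma hess_sub2: "hess_space n h' \<subseteq> space_sum (hess_space n h) (hess_space n h')"
proof
  fix A assume A: "A \<in> hess_space n h'"
  have "0\<^sub>m n n \<in> hess_space n h" by (simp add: hess_space_def)
  moreover have "A = 0\<^sub>m n n + A" using A by (simp add: hess_space_def)
  ultimately show "A \<in> space_sum (hess_space n h) (hess_space n h')"
    unfolding space_sum_def using A by blast
qed

theorem mainTheorem6:
  fixes n :: nat and h h' :: "nat \<Rightarrow> nat"
  assumes "hessenberg_fun n h" and "hessenberg_fun n h'"
  shows "X_space n (space_sum (hess_space n h) (hess_space n h'))
           = X_space n (hess_space n h) \<union> X_space n (hess_space n h')"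
proof
  show "X_space n (space_sum (hess_space n h) (hess_space n h'))
           \<subseteq> X_space n (hess_space n h) \<union> X_space n (hess_space n h')"
  proof
    fix F assume "F \<in> X_space n (space_sum (hess_space n h) (hess_space n h'))"
    then obtain g gi where g: "F = flag_of n g" "g \<in> carrier_mat n n" "invertible_mat g"
      "gi \<in> carrier_mat n n" "gi * g = 1\<^sub>m n" "gi * E1n n * g \<in> space_sum (hess_space n h) (hess_space n h')"
      unfolding X_space_def by blast
    have "E1n n \<in> carrier_mat n n" by (simp add: E1n_def)
    hence "gi * E1n n * g \<in> carrier_mat n n" using g by (meson mult_carrier_mat)
    hence "gi * E1n n * g \<in> hess_space n h \<or> gi * E1n n * g \<in> hess_space n h'"
      using rank1_sum[OF assms, of "gi * E1n n * g" "\<lambda>k. gi $$ (k,0)" "\<lambda>l. g $$ (n-1,l)"] g E1n_entry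
      by blast
    thus "F \<in> X_space n (hess_space n h) \<union> X_space n (hess_space n h')"
      unfolding X_space_def using g by blast
  qed
next
  show "X_space n (hess_space n h) \<union> X_space n (hess_space n h')
     \<subseteq> X_space n (space_sum (hess_space n h) (hess_space n h'))"
    using hess_sub1[OF refl, of n h h'] hess_sub2[of n h' h]
    unfolding X_space_def by blast
qed

end
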